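(* Let $1<p<\infty$, $k\in\mathbb N$, and $\delta,c_1,\dots,c_k>0$. Suppose $l\in\mathbb N$ satisfies $l\left(\frac{\min(c_1,\dots,c_k)}{\max(c_1,\dots,c_k)}\right)^p\ge1$. Let $(\Omega,\Sigma,\mu)$ be any measure space and let $f_1,\dots,f_l$ be pairwise disjoint functions in $L^{p,\infty}(\Omega,\Sigma,\mu)$ such that $|f_j|\ge\sum_{m=1}^k c_m\chi_{\sigma(m,j)}$ for each $j$, where for each $j$ the sets $\sigma(1,j),\dots,\sigma(k,j)\in\Sigma$ are pairwise disjoint with $\mu(\sigma(m,j))>(\delta/c_m)^p$ for $1\le m\le k$. Then $$\Big\|\sum_{j=1}^l j^{-1/p}f_j\Big\|\ge\Big(\frac k2\Big)^{1/p}\delta.$$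
   Context: $L^{p,\infty}(\Omega,\Sigma,\mu)$ is the space of (equivalence classes of) measurable $f$ with $\|f\|=\sup_{c>0}c\,(\mu\{|f|>c\})^{1/p}<\infty$; here $\|\cdot\|$ denotes exactly this quasi-norm. Functions $f,g$ are disjoint if $|f|\wedge|g|=0$. *)

theory Defs
  imports "HOL-Analysis.Analysis"
begin

definition weak_Lp_norm :: "'a measure \<Rightarrow> real \<Rightarrow> ('a \<Rightarrow> real) \<Rightarrow> ennreal" where
  "weak_Lp_norm M p f =
     (SUP c\<in>{0<..}. (let d = emeasure M {x \<in> space M. c < \<bar>f x\<bar>} in
        if d = \<infinity> then \<infinity> else ennreal (c * (enn2real d) powr (1 / p))))"

definition weak_Lp :: "'a measure \<Rightarrow> real \<Rightarrow> ('a \<Rightarrow> real) set" where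
  "weak_Lp M p = {f. f \<in> borel_measurable M \<and> weak_Lp_norm M p f < \<infinity>}"

text \<open>Disjointness in the lattice sense (for equivalence classes): |f| inf |g| = 0 a.e.\<close>
definition disjoint_fun :: "'a measure \<Rightarrow> ('a \<Rightarrow> real) \<Rightarrow> ('a \<Rightarrow> real) \<Rightarrow> bool" where
  "disjoint_fun M f g \<longleftrightarrow> (AE x in M. min \<bar>f x\<bar> \<bar>g x\<bar> = 0)"

end

theory Submission
  imports Defs
begin


lemma card_count:
  fixes X :: real and l :: nat
  assumes "1 < X" "X \<le> 2 * real l"
  shows "X / 2 \<le> real (card {j\<in>{1..l}. real j < X})"
proof -
  define n where "n = min l (nat \<lceil>X\<rceil> - 1)"
  have sub: "{1..n} \<subseteq> {j\<in>{1..l}. real j < X}"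
  proof
    fix j assume "j \<in> {1..n}"
    then have "j \<le> l" "1 \<le> j" "j \<le> nat \<lceil>X\<rceil> - 1" by (auto simp: n_def)
    then have "real j < X" by linarith
    with \<open>j \<le> l\<close> \<open>1 \<le> j\<close> show "j \<in> {j\<in>{1..l}. real j < X}" by auto
  qed
  have "card {1..n} \<le> card {j\<in>{1..l}. real j < X}"
    by (rule card_mono[OF _ sub]) auto
  moreover have "X / 2 \<le> real n"
  proof (cases "l \<le> nat \<lceil>X\<rceil> - 1")
    case True then show ?thesis using assms by (simp add: n_def)
  next
    case False
    then have "n = nat \<lceil>X\<rceil> - 1" by (simp add: n_def)
    moreover have "X / 2 \<le> real (nat \<lceil>X\<rceil> - 1)"
    proof (cases "X \<le> 2")
      case True
      then have "\<lceil>X\<rceil> = 2" using assms by linarith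
      then show ?thesis using True by simp
    next
      case False
      then show ?thesis using assms by linarith
    qed
    ultimately show ?thesis by simp
  qed
  ultimately show ?thesis by simp
qed

lemma main:
  fixes M :: "'a measure" and p \<delta> :: real and k l :: nat
    and c :: "nat \<Rightarrow> real" and f :: "nat \<Rightarrow> 'a \<Rightarrow> real"
    and \<sigma> :: "nat \<Rightarrow> nat \<Rightarrow> 'a set"
  assumes p: "1 < p"
    and k: "1 \<le> k"
    and \<delta>: "0 < \<delta>"
    and c_pos: "\<And>m. m \<in> {1..k} \<Longrightarrow> 0 < c m"
    and l: "real l * (Min (c ` {1..k}) / Max (c ` {1..k})) powr p \<ge> 1"
    and f_meas: "\<And>j. j \<in> {1..l} \<Longrightarrow> f j \<in> borel_measurable M"
    and f_disj: "\<And>i j. i \<in> {1..l} \<Longrightarrow> j \<in> {1..l} \<Longrightarrow> i \<noteq> j \<Longrightarrow> AE x in M. min \<bar>f i x\<bar> \<bar>f j x\<bar> = 0"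
    and \<sigma>_sets: "\<And>m j. m \<in> {1..k} \<Longrightarrow> j \<in> {1..l} \<Longrightarrow> \<sigma> m j \<in> sets M"
    and \<sigma>_disj: "\<And>m m' j. m \<in> {1..k} \<Longrightarrow> m' \<in> {1..k} \<Longrightarrow> j \<in> {1..l} \<Longrightarrow> m \<noteq> m'
                   \<Longrightarrow> \<sigma> m j \<inter> \<sigma> m' j = {}"
    and \<sigma>_meas: "\<And>m j. m \<in> {1..k} \<Longrightarrow> j \<in> {1..l} \<Longrightarrow>
                   emeasure M (\<sigma> m j) > ennreal ((\<delta> / c m) powr p)"
    and f_lower: "\<And>j. j \<in> {1..l} \<Longrightarrow>
                   AE x in M. \<bar>f j x\<bar> \<ge> (\<Sum>m=1..k. c m * indicator (\<sigma> m j) x)"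
  defines "F \<equiv> (\<lambda>x. \<Sum>j=1..l. real j powr (-1 / p) * f j x)"
  shows "\<exists>t>0. ennreal ((real k / 2) powr (1 / p) * \<delta>) \<le> 
     (let d = emeasure M {x \<in> space M. t < \<bar>F x\<bar>} in
        if d = \<infinity> then \<infinity> else ennreal (t * (enn2real d) powr (1 / p)))"
proof -
  have l1: "1 \<le> l" using l by (cases "l = 0") auto
  define cmin where "cmin = Min (c ` {1..k})"
  define cmax where "cmax = Max (c ` {1..k})"
  have fin: "finite (c ` {1..k})" "c ` {1..k} \<noteq> {}" using k by auto
  have cmin_le: "cmin \<le> c m" and le_cmax: "c m \<le> cmax" if "m \<in> {1..k}" for m
    using that fin by (auto simp: cmin_def cmax_def)
  have cmin_pos: "0 < cmin" using fin c_pos by (auto simp: cmin_def)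
  have cmax_pos: "0 < cmax" using cmin_pos cmin_le[of 1] le_cmax[of 1] k by auto
  have lrat: "real l * (cmin / cmax) powr p \<ge> 1" using l by (simp add: cmin_def cmax_def)
  define t where "t = cmax / (2 * real l) powr (1 / p)"
  have t_pos: "0 < t" using cmax_pos l1 by (simp add: t_def)
  define X where "X m = (c m / t) powr p" for m
  have tp: "t powr p = cmax powr p / (2 * real l)"
    using p l1 cmax_pos by (simp add: t_def powr_divide powr_powr)
  have X_eq: "X m = 2 * real l * (c m / cmax) powr p" if "m \<in> {1..k}" for m
    using c_pos[OF that] t_pos cmax_pos l1
    by (simp add: X_def powr_divide tp field_simps)
  have X_gt: "1 < X m" and X_le: "X m \<le> 2 * real l" if m: "m \<in> {1..k}" for m
  proof -
    have "(cmin / cmax) powr p \<le> (c m / cmax) powr p"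
      using cmin_pos cmax_pos cmin_le[OF m] p
      by (intro powr_mono2) (auto simp: divide_right_mono)
    then have "1 \<le> real l * (c m / cmax) powr p" using lrat l1
      by (meson mult_left_mono of_nat_0_le_iff order_trans)
    then show "1 < X m" using X_eq[OF m] by simp
    have "(c m / cmax) powr p \<le> 1" using c_pos[OF m] cmax_pos le_cmax[OF m] p
      using powr_mono2[of p "c m / cmax" 1] by auto
    then show "X m \<le> 2 * real l" using X_eq[OF m] l1
      by (simp add: mult_left_le)
  qed

  define J where "J m = {j\<in>{1..l}. real j < X m}" for m
  have cardJ: "X m / 2 \<le> real (card (J m))" if "m \<in> {1..k}" for m
    unfolding J_def using card_count[OF X_gt[OF that] X_le[OF that]] .
  have Jt: "t < real j powr (-1 / p) * c m" if m: "m \<in> {1..k}" and j: "j \<in> J m" for m j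
  proof -
    have j1: "1 \<le> j" and jl: "real j < (c m / t) powr p" using j by (auto simp: J_def X_def)
    have "real j powr (1 / p) < ((c m / t) powr p) powr (1 / p)"
      using jl p by (intro powr_less_mono2) auto
    also have "\<dots> = c m / t" using p c_pos[OF m] t_pos by (simp add: powr_powr powr_one)
    finally have "t * real j powr (1 / p) < c m" using t_pos by (simp add: field_simps)
    moreover have "0 < real j powr (1 / p)" using j1 by simp
    ultimately have lt: "t < c m / real j powr (1 / p)" by (simp add: pos_less_divide_eq)
    have eq: "real j powr (-1 / p) * c m = c m / real j powr (1 / p)"
    proof -
      have "real j powr (-1 / p) = real j powr (- (1 / p))" by simp
      also have "\<dots> = 1 / real j powr (1 / p)" by (rule powr_minus_divide)
      finally show ?thesis by simp
    qed
    show ?thesis using lt unfolding eq .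
  qed
  define \<sigma>' where "\<sigma>' m j = \<sigma> m j \<inter> {x\<in>space M. c m \<le> \<bar>f j x\<bar> \<and> (\<forall>i\<in>{1..l}. i \<noteq> j \<longrightarrow> f i x = 0)}" for m j
  have \<sigma>'_sets: "\<sigma>' m j \<in> sets M" if m: "m \<in> {1..k}" and j: "j \<in> {1..l}" for m j
  proof -
    have "{x\<in>space M. c m \<le> \<bar>f j x\<bar>} \<in> sets M"
    proof -
      note [measurable] = f_meas[OF j]
      show ?thesis by measurable
    qed
    moreover have "{x\<in>space M. \<forall>i\<in>{1..l}. i \<noteq> j \<longrightarrow> f i x = 0} \<in> sets M"
    proof (rule sets.sets_Collect_finite_All')
      fix i assume i: "i \<in> {1..l}"
      note [measurable] = f_meas[OF i]
      have "{x\<in>space M. f i x = 0} \<in> sets M" by measurable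
      then show "{x\<in>space M. i \<noteq> j \<longrightarrow> f i x = 0} \<in> sets M" by (cases "i = j") auto
    qed (use l1 in auto)
    ultimately have "{x\<in>space M. c m \<le> \<bar>f j x\<bar>} \<inter> {x\<in>space M. \<forall>i\<in>{1..l}. i \<noteq> j \<longrightarrow> f i x = 0} \<in> sets M"
      by (rule sets.Int)
    moreover have "{x\<in>space M. c m \<le> \<bar>f j x\<bar> \<and> (\<forall>i\<in>{1..l}. i \<noteq> j \<longrightarrow> f i x = 0)} =
       {x\<in>space M. c m \<le> \<bar>f j x\<bar>} \<inter> {x\<in>space M. \<forall>i\<in>{1..l}. i \<noteq> j \<longrightarrow> f i x = 0}" by blast
    ultimately have "{x\<in>space M. c m \<le> \<bar>f j x\<bar> \<and> (\<forall>i\<in>{1..l}. i \<noteq> j \<longrightarrow> f i x = 0)} \<in> sets M"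
      by simp
    then show ?thesis unfolding \<sigma>'_def using \<sigma>_sets[OF m j] by (rule sets.Int[rotated])
  qed
  have \<sigma>'_AE: "AE x in M. x \<in> \<sigma> m j \<longrightarrow> x \<in> \<sigma>' m j" if m: "m \<in> {1..k}" and j: "j \<in> {1..l}" for m j
  proof -
    have "AE x in M. \<forall>i\<in>{1..l}-{j}. min \<bar>f i x\<bar> \<bar>f j x\<bar> = 0"
    proof (rule AE_finite_allI)
      fix i assume "i \<in> {1..l}-{j}"
      then show "AE x in M. min \<bar>f i x\<bar> \<bar>f j x\<bar> = 0" using f_disj[of i j] j by auto
    qed simp
    with f_lower[OF j] AE_space show ?thesis
    proof eventually_elim
      case (elim x)
      show ?case
      proof
        assume x: "x \<in> \<sigma> m j"
        have "(\<Sum>m'=1..k. c m' * indicator (\<sigma> m' j) x) = c m * indicator (\<sigma> m j) x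
               + (\<Sum>m'\<in>{1..k}-{m}. c m' * indicator (\<sigma> m' j) x)"
          by (rule sum.remove) (use m in auto)
        also have "(\<Sum>m'\<in>{1..k}-{m}. c m' * indicator (\<sigma> m' j) x) = 0"
        proof (intro sum.neutral ballI)
          fix m' assume m'': "m' \<in> {1..k}-{m}"
          then have "x \<notin> \<sigma> m' j" using \<sigma>_disj[OF m _ j, of m'] x by auto
          then show "c m' * indicator (\<sigma> m' j) x = 0" by simp
        qed
        finally have "c m \<le> \<bar>f j x\<bar>" using elim x by simp
        moreover then have "\<forall>i\<in>{1..l}. i \<noteq> j \<longrightarrow> f i x = 0"
          using elim c_pos[OF m] by (auto simp: min_def split: if_splits)
        ultimately show "x \<in> \<sigma>' m j" using x elim by (simp add: \<sigma>'_def)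
      qed
    qed
  qed
  define S where "S = Sigma {1..k} J"
  have S_fin: "finite S" by (simp add: S_def J_def)
  have JS: "j \<in> {1..l}" if "j \<in> J m" for m j using that by (auto simp: J_def)
  have S_sets: "(\<lambda>(m,j). \<sigma>' m j) ` S \<subseteq> sets M"
  proof (rule image_subsetI)
    fix a assume "a \<in> S"
    then obtain m j where "a = (m, j)" "m \<in> {1..k}" "j \<in> J m" by (auto simp: S_def)
    moreover then have "j \<in> {1..l}" using JS by blast
    ultimately show "(case a of (m, j) \<Rightarrow> \<sigma>' m j) \<in> sets M" using \<sigma>'_sets by simp
  qed
  have S_disj: "disjoint_family_on (\<lambda>(m,j). \<sigma>' m j) S"
  proof (unfold disjoint_family_on_def, intro ballI impI)
    fix a b assume a: "a \<in> S" and b: "b \<in> S" and ab: "a \<noteq> b"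
    obtain m j where mj: "a = (m, j)" by (cases a)
    obtain m' j' where mj': "b = (m', j')" by (cases b)
    have m: "m \<in> {1..k}" and j: "j \<in> J m" using a mj by (auto simp: S_def)
    have m': "m' \<in> {1..k}" and j': "j' \<in> J m'" using b mj' by (auto simp: S_def)
    have ne: "m = m' \<longrightarrow> j \<noteq> j'" using ab mj mj' by auto
    have "\<sigma>' m j \<inter> \<sigma>' m' j' = {}"
    proof (cases "j = j'")
      case True
      then have "m \<noteq> m'" using ne by blast
      moreover have "j \<in> {1..l}" using JS j by blast
      ultimately have "\<sigma> m j \<inter> \<sigma> m' j = {}" using \<sigma>_disj[OF m m'] by blast
      then show ?thesis using True by (auto simp: \<sigma>'_def)
    next
      case False
      show ?thesis
      proof (rule ccontr)
        assume "\<sigma>' m j \<inter> \<sigma>' m' j' \<noteq> {}"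
        then obtain x where "x \<in> \<sigma>' m j" "x \<in> \<sigma>' m' j'" by blast
        moreover have "j \<in> {1..l}" using JS j by blast
        ultimately have "c m \<le> \<bar>f j x\<bar>" "f j x = 0" using False unfolding \<sigma>'_def by blast+
        then show False using c_pos[OF m] by simp
      qed
    qed
    then show "(case a of (m, j) \<Rightarrow> \<sigma>' m j) \<inter> (case b of (m, j) \<Rightarrow> \<sigma>' m j) = {}"
      using mj mj' by simp
  qed
  define A where "A = {x \<in> space M. t < \<bar>F x\<bar>}"
  have U_sub: "(\<Union>(m,j)\<in>S. \<sigma>' m j) \<subseteq> A"
  proof (rule subsetI)
    fix x assume "x \<in> (\<Union>(m,j)\<in>S. \<sigma>' m j)"
    then obtain m j where mjS: "(m, j) \<in> S" and x: "x \<in> \<sigma>' m j" by auto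
    have m: "m \<in> {1..k}" and j: "j \<in> J m" using mjS by (auto simp: S_def)
    have jl: "j \<in> {1..l}" using j JS by auto
    have xs: "x \<in> space M" "c m \<le> \<bar>f j x\<bar>" "\<forall>i\<in>{1..l}. i \<noteq> j \<longrightarrow> f i x = 0"
      using x by (auto simp: \<sigma>'_def)
    have "F x = real j powr (-1 / p) * f j x + (\<Sum>i\<in>{1..l}-{j}. real i powr (-1 / p) * f i x)"
      unfolding F_def by (rule sum.remove) (use jl in auto)
    also have "(\<Sum>i\<in>{1..l}-{j}. real i powr (-1 / p) * f i x) = 0"
      using xs(3) by (intro sum.neutral) auto
    finally have "\<bar>F x\<bar> = real j powr (-1 / p) * \<bar>f j x\<bar>" by (simp add: abs_mult)
    moreover have "real j powr (-1 / p) * c m \<le> real j powr (-1 / p) * \<bar>f j x\<bar>"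
      using xs(2) by (intro mult_left_mono) auto
    ultimately show "x \<in> A" using Jt[OF m j] xs(1) by (simp add: A_def)
  qed
  have A_sets: "A \<in> sets M"
  proof -
    have "F \<in> borel_measurable M" unfolding F_def
      using f_meas by (intro borel_measurable_sum borel_measurable_times) auto
    then show ?thesis unfolding A_def by measurable
  qed
  define D where "D = (\<Sum>(m,j)\<in>S. (\<delta> / c m) powr p)"
  have "ennreal D = (\<Sum>(m,j)\<in>S. ennreal ((\<delta> / c m) powr p))"
    unfolding D_def case_prod_beta by (rule sum_ennreal[symmetric]) simp
  also have "\<dots> \<le> (\<Sum>(m,j)\<in>S. emeasure M (\<sigma> m j))"
    using \<sigma>_meas JS by (intro sum_mono) (auto simp: S_def less_imp_le)
  also have "\<dots> \<le> (\<Sum>(m,j)\<in>S. emeasure M (\<sigma>' m j))"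
    using \<sigma>'_AE \<sigma>'_sets JS by (intro sum_mono) (auto simp: S_def intro!: emeasure_mono_AE)
  also have "\<dots> = emeasure M (\<Union>(m,j)\<in>S. \<sigma>' m j)"
    using sum_emeasure[OF S_sets S_disj S_fin] by (simp add: case_prod_beta)
  also have "\<dots> \<le> emeasure M A" using U_sub A_sets by (rule emeasure_mono)
  finally have DA: "ennreal D \<le> emeasure M A" .
  have "D = (\<Sum>m\<in>{1..k}. real (card (J m)) * (\<delta> / c m) powr p)"
  proof -
    have finJ: "finite (J m)" for m by (simp add: J_def)
    have "D = (\<Sum>m\<in>{1..k}. \<Sum>j\<in>J m. (\<delta> / c m) powr p)"
      unfolding D_def S_def by (rule sum.Sigma[symmetric]) (auto simp: finJ)
    then show ?thesis by simp
  qed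
  also have "\<dots> \<ge> (\<Sum>m\<in>{1..k}. (X m / 2) * (\<delta> / c m) powr p)"
    using cardJ by (intro sum_mono mult_right_mono) auto
  finally have D1: "(\<Sum>m\<in>{1..k}. (X m / 2) * (\<delta> / c m) powr p) \<le> D" .
  have "(\<Sum>m\<in>{1..k}. (X m / 2) * (\<delta> / c m) powr p) = (\<Sum>m\<in>{1..k}. (\<delta> / t) powr p / 2)"
  proof (intro sum.cong refl)
    fix m assume m: "m \<in> {1..k}"
    have "X m * (\<delta> / c m) powr p = (c m / t * (\<delta> / c m)) powr p"
      unfolding X_def by (rule powr_mult[symmetric])
    also have "c m / t * (\<delta> / c m) = \<delta> / t" using c_pos[OF m] by simp
    finally show "(X m / 2) * (\<delta> / c m) powr p = (\<delta> / t) powr p / 2" by simp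
  qed
  moreover have "(\<Sum>m\<in>{1..k}. (\<delta> / t) powr p / 2) = real k / 2 * (\<delta> / t) powr p"
    by (simp only: sum_constant card_atLeastAtMost) simp
  ultimately have D2: "real k / 2 * (\<delta> / t) powr p \<le> D" using D1 by linarith
  have D_pos: "0 \<le> real k / 2 * (\<delta> / t) powr p" by simp
  have key: "(real k / 2) powr (1 / p) * \<delta> \<le> t * (enn2real (emeasure M A)) powr (1 / p)"
    if fin: "emeasure M A \<noteq> \<infinity>"
  proof -
    obtain r where r: "emeasure M A = ennreal r" "0 \<le> r" using fin by (cases "emeasure M A") auto
    have "D \<le> enn2real (emeasure M A)" using DA r by simp
    then have "(real k / 2 * (\<delta> / t) powr p) powr (1 / p) \<le> (enn2real (emeasure M A)) powr (1 / p)"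
      using D2 D_pos p by (intro powr_mono2) auto
    moreover have "(real k / 2 * (\<delta> / t) powr p) powr (1 / p) = (real k / 2) powr (1 / p) * (\<delta> / t)"
    proof -
      have "((\<delta> / t) powr p) powr (1 / p) = \<delta> / t" using p \<delta> t_pos by (simp add: powr_powr)
      then show ?thesis by (simp only: powr_mult)
    qed
    ultimately have "(real k / 2) powr (1 / p) * (\<delta> / t) \<le> (enn2real (emeasure M A)) powr (1 / p)" by simp
    then have "t * ((real k / 2) powr (1 / p) * (\<delta> / t)) \<le> t * (enn2real (emeasure M A)) powr (1 / p)"
      using t_pos by (intro mult_left_mono) auto
    then show ?thesis using t_pos by (simp add: field_simps)
  qed
  show ?thesis
    using t_pos key by (intro exI[of _ t]) (auto simp: Let_def A_def[symmetric] intro: ennreal_leI)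
qed


theorem lemma9:
  fixes M :: "'a measure" and p \<delta> :: real and k l :: nat
    and c :: "nat \<Rightarrow> real" and f :: "nat \<Rightarrow> 'a \<Rightarrow> real"
    and \<sigma> :: "nat \<Rightarrow> nat \<Rightarrow> 'a set"
  assumes p: "1 < p"
    and k: "1 \<le> k"
    and \<delta>: "0 < \<delta>"
    and c_pos: "\<And>m. m \<in> {1..k} \<Longrightarrow> 0 < c m"
    and l: "real l * (Min (c ` {1..k}) / Max (c ` {1..k})) powr p \<ge> 1"
    and f_weak: "\<And>j. j \<in> {1..l} \<Longrightarrow> f j \<in> weak_Lp M p"
    and f_disj: "\<And>i j. i \<in> {1..l} \<Longrightarrow> j \<in> {1..l} \<Longrightarrow> i \<noteq> j \<Longrightarrow> disjoint_fun M (f i) (f j)"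
    and \<sigma>_sets: "\<And>m j. m \<in> {1..k} \<Longrightarrow> j \<in> {1..l} \<Longrightarrow> \<sigma> m j \<in> sets M"
    and \<sigma>_disj: "\<And>m m' j. m \<in> {1..k} \<Longrightarrow> m' \<in> {1..k} \<Longrightarrow> j \<in> {1..l} \<Longrightarrow> m \<noteq> m'
                   \<Longrightarrow> \<sigma> m j \<inter> \<sigma> m' j = {}"
    and \<sigma>_meas: "\<And>m j. m \<in> {1..k} \<Longrightarrow> j \<in> {1..l} \<Longrightarrow>
                   emeasure M (\<sigma> m j) > ennreal ((\<delta> / c m) powr p)"
    and f_lower: "\<And>j. j \<in> {1..l} \<Longrightarrow>
                   AE x in M. \<bar>f j x\<bar> \<ge> (\<Sum>m=1..k. c m * indicator (\<sigma> m j) x)"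
  shows "weak_Lp_norm M p (\<lambda>x. \<Sum>j=1..l. real j powr (-1 / p) * f j x)
           \<ge> ennreal ((real k / 2) powr (1 / p) * \<delta>)"
  proof -
  have fm: "\<And>j. j \<in> {1..l} \<Longrightarrow> f j \<in> borel_measurable M"
    using f_weak by (simp add: weak_Lp_def)
  have fd: "\<And>i j. i \<in> {1..l} \<Longrightarrow> j \<in> {1..l} \<Longrightarrow> i \<noteq> j \<Longrightarrow> AE x in M. min \<bar>f i x\<bar> \<bar>f j x\<bar> = 0"
    using f_disj by (simp add: disjoint_fun_def)
  obtain t where t: "t > 0" and le: "ennreal ((real k / 2) powr (1 / p) * \<delta>) \<le>
     (let d = emeasure M {x \<in> space M. t < \<bar>(\<lambda>x. \<Sum>j=1..l. real j powr (-1 / p) * f j x) x\<bar>} in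
        if d = \<infinity> then \<infinity> else ennreal (t * (enn2real d) powr (1 / p)))"
    using main[where f=f and c=c and \<sigma>=\<sigma> and M=M, OF p k \<delta> c_pos l fm fd \<sigma>_sets \<sigma>_disj \<sigma>_meas f_lower] by blast
  show ?thesis unfolding weak_Lp_norm_def
    by (rule order_trans[OF le]) (rule SUP_upper, use t in auto)
qed

end
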